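(* For a locally compact group $G$ the following are equivalent: (i) $G$ admits a uniform, coarsely geodesic metric; (ii) $G$ admits a uniform, quasi-geodesic metric; (iii) $G$ admits a left-invariant, proper, quasi-geodesic metric; (iv) $G$ admits a left-invariant proper metric for which it is quasi-isometric to a graph of bounded degree; (v) $G$ is compactly generated.
   Context: A metric $d$ on $G$ is uniform if for sequences $(g_n,h_n)$, $d(g_n,h_n)\to\infty$ iff $g_n^{-1}h_n$ eventually leaves every compact subset. Proper: closed balls are compact. For $b>0$, a $b$-chain from $x$ to $y$ is $x=x_0,\dots,x_m=y$ with $d(x_i,x_{i+1})\le b$; $d_b(x,y)=\inf\sum_i d(x_i,x_{i-1})$ over $b$-chains. $(X,d)$ is quasi-geodesic if for some $b>0$ the identity $(X,d)\to(X,d_b)$ is a quasi-isometry; coarsely geodesic if for some $b>0$, $d_b$ is finite and for every $R$ there is $R'$ with $d(x,y)\le R\Rightarrow d_b(x,y)\le R'$ (the identity $(X,d_b)\to(X,d)$ is a uniform embedding). A quasi-isometry $F$ satisfies $C^{-1}d(x,y)-C\le d(F(x),F(y))\le Cd(x,y)+C$ and has image at bounded distance from every point; graphs carry their path metric. *)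

theory Defs
  imports "HOL-Analysis.Analysis"
begin

text \<open>Groups are written additively (class group_add, not assumed commutative);
 a topological group is a type of class topological_group_add.\<close>

definition is_metric :: "('a \<Rightarrow> 'a \<Rightarrow> real) \<Rightarrow> bool" where
  "is_metric d \<longleftrightarrow> (\<forall>x y. d x y = 0 \<longleftrightarrow> x = y) \<and> (\<forall>x y. d x y = d y x)
     \<and> (\<forall>x y z. d x z \<le> d x y + d y z)"

definition uniform_metric :: "('a::topological_group_add \<Rightarrow> 'a \<Rightarrow> real) \<Rightarrow> bool" where
  "uniform_metric d \<longleftrightarrow> is_metric d \<and>
     (\<forall>g h :: nat \<Rightarrow> 'a.
        filterlim (\<lambda>n. d (g n) (h n)) at_top sequentially \<longleftrightarrow>
        (\<forall>K. compact K \<longrightarrow> eventually (\<lambda>n. - g n + h n \<notin> K) sequentially))"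

definition left_invariant :: "('a::group_add \<Rightarrow> 'a \<Rightarrow> real) \<Rightarrow> bool" where
  "left_invariant d \<longleftrightarrow> (\<forall>g x y. d (g + x) (g + y) = d x y)"

definition proper_metric :: "('a::topological_space \<Rightarrow> 'a \<Rightarrow> real) \<Rightarrow> bool" where
  "proper_metric d \<longleftrightarrow> (\<forall>x r. compact {y. d x y \<le> r})"

definition b_chains :: "('a \<Rightarrow> 'a \<Rightarrow> real) \<Rightarrow> real \<Rightarrow> 'a \<Rightarrow> 'a \<Rightarrow> 'a list set" where
  "b_chains d b x y = {xs. xs \<noteq> [] \<and> hd xs = x \<and> last xs = y \<and>
      (\<forall>i. Suc i < length xs \<longrightarrow> d (xs ! i) (xs ! Suc i) \<le> b)}"

definition chain_length :: "('a \<Rightarrow> 'a \<Rightarrow> real) \<Rightarrow> 'a list \<Rightarrow> real" where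
  "chain_length d xs = (\<Sum>i<length xs - 1. d (xs ! i) (xs ! Suc i))"

definition chain_dist :: "('a \<Rightarrow> 'a \<Rightarrow> real) \<Rightarrow> real \<Rightarrow> 'a \<Rightarrow> 'a \<Rightarrow> real" where
  "chain_dist d b x y = Inf (chain_length d ` b_chains d b x y)"

text \<open>d_b is finite (real-valued) iff every pair is joined by a b-chain\<close>
definition b_chain_connected :: "('a \<Rightarrow> 'a \<Rightarrow> real) \<Rightarrow> real \<Rightarrow> bool" where
  "b_chain_connected d b \<longleftrightarrow> (\<forall>x y. b_chains d b x y \<noteq> {})"

definition quasi_isometry ::
  "'a set \<Rightarrow> ('a \<Rightarrow> 'a \<Rightarrow> real) \<Rightarrow> 'b set \<Rightarrow> ('b \<Rightarrow> 'b \<Rightarrow> real) \<Rightarrow> ('a \<Rightarrow> 'b) \<Rightarrow> bool" where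
  "quasi_isometry X d Y e F \<longleftrightarrow> F ` X \<subseteq> Y \<and> (\<exists>C>0.
     (\<forall>x\<in>X. \<forall>y\<in>X. d x y / C - C \<le> e (F x) (F y) \<and> e (F x) (F y) \<le> C * d x y + C) \<and>
     (\<forall>z\<in>Y. \<exists>x\<in>X. e z (F x) \<le> C))"

definition quasi_geodesic :: "('a \<Rightarrow> 'a \<Rightarrow> real) \<Rightarrow> bool" where
  "quasi_geodesic d \<longleftrightarrow> (\<exists>b>0. b_chain_connected d b \<and>
      quasi_isometry UNIV d UNIV (chain_dist d b) id)"

definition coarsely_geodesic :: "('a \<Rightarrow> 'a \<Rightarrow> real) \<Rightarrow> bool" where
  "coarsely_geodesic d \<longleftrightarrow> (\<exists>b>0. b_chain_connected d b \<and>
      (\<forall>R. \<exists>R'. \<forall>x y. d x y \<le> R \<longrightarrow> chain_dist d b x y \<le> R'))"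

definition is_graph :: "nat set \<Rightarrow> (nat \<Rightarrow> nat \<Rightarrow> bool) \<Rightarrow> bool" where
  "is_graph V E \<longleftrightarrow> (\<forall>x y. E x y \<longrightarrow> x \<in> V \<and> y \<in> V \<and> E y x \<and> x \<noteq> y)"

definition walk :: "(nat \<Rightarrow> nat \<Rightarrow> bool) \<Rightarrow> nat list \<Rightarrow> bool" where
  "walk E xs \<longleftrightarrow> xs \<noteq> [] \<and> (\<forall>i. Suc i < length xs \<longrightarrow> E (xs ! i) (xs ! Suc i))"

definition graph_connected :: "nat set \<Rightarrow> (nat \<Rightarrow> nat \<Rightarrow> bool) \<Rightarrow> bool" where
  "graph_connected V E \<longleftrightarrow> (\<forall>x\<in>V. \<forall>y\<in>V. \<exists>xs. walk E xs \<and> hd xs = x \<and> last xs = y)"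

definition graph_dist :: "(nat \<Rightarrow> nat \<Rightarrow> bool) \<Rightarrow> nat \<Rightarrow> nat \<Rightarrow> real" where
  "graph_dist E x y = real (LEAST n. \<exists>xs. walk E xs \<and> hd xs = x \<and> last xs = y \<and> length xs = Suc n)"

definition bounded_degree :: "nat set \<Rightarrow> (nat \<Rightarrow> nat \<Rightarrow> bool) \<Rightarrow> bool" where
  "bounded_degree V E \<longleftrightarrow> (\<exists>k::nat. \<forall>x\<in>V. finite {y. E x y} \<and> card {y. E x y} \<le> k)"

definition qi_to_bounded_degree_graph :: "('a \<Rightarrow> 'a \<Rightarrow> real) \<Rightarrow> bool" where
  "qi_to_bounded_degree_graph d \<longleftrightarrow> (\<exists>V E F. V \<noteq> {} \<and> is_graph V E \<and> graph_connected V E \<and>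
      bounded_degree V E \<and> quasi_isometry UNIV d V (graph_dist E) F)"

definition add_subgroup :: "'a::group_add set \<Rightarrow> bool" where
  "add_subgroup H \<longleftrightarrow> 0 \<in> H \<and> (\<forall>x\<in>H. \<forall>y\<in>H. x + y \<in> H) \<and> (\<forall>x\<in>H. - x \<in> H)"

definition generated_subgroup :: "'a::group_add set \<Rightarrow> 'a set" where
  "generated_subgroup K = \<Inter>{H. add_subgroup H \<and> K \<subseteq> H}"

definition compactly_generated :: "'a::topological_group_add itself \<Rightarrow> bool" where
  "compactly_generated _ \<longleftrightarrow> (\<exists>K::'a set. compact K \<and> generated_subgroup K = UNIV)"

end

theory Submission
  imports Defs "HOL-Library.Countable_Set"
begin

lemma succ_nth: "successively P xs \<longleftrightarrow> (\<forall>i. Suc i < length xs \<longrightarrow> P (xs!i) (xs!Suc i))"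
proof (induction xs)
  case Nil then show ?case by simp
next
  case (Cons a xs)
  show ?case
  proof (cases xs)
    case Nil then show ?thesis by simp
  next
    case (Cons y ys)
    have "(\<forall>i. Suc i < length (a#xs) \<longrightarrow> P ((a#xs)!i) ((a#xs)!Suc i)) \<longleftrightarrow>
          P a y \<and> (\<forall>i. Suc i < length xs \<longrightarrow> P (xs!i) (xs!Suc i))"
    proof -
      have sp: "\<And>Q. (\<forall>i::nat. Q i) = (Q 0 \<and> (\<forall>i. Q (Suc i)))" by (metis not0_implies_Suc)
      show ?thesis by (subst sp) (simp add: Cons)
    qed
    then show ?thesis using Cons.IH Cons by simp
  qed
qed

lemma walk_iff: "walk E xs \<longleftrightarrow> xs \<noteq> [] \<and> successively E xs"
  unfolding walk_def succ_nth by simp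

lemma b_chains_iff: "xs \<in> b_chains d b x y \<longleftrightarrow>
   xs \<noteq> [] \<and> hd xs = x \<and> last xs = y \<and> successively (\<lambda>u v. d u v \<le> b) xs"
  unfolding b_chains_def succ_nth by simp

lemma chain_length_single[simp]: "chain_length d [x] = 0"
  by (simp add: chain_length_def)

lemma chain_length_Cons2[simp]: "chain_length d (x # y # xs) = d x y + chain_length d (y # xs)"
  unfolding chain_length_def by (simp del: sum.lessThan_Suc add: sum.lessThan_Suc_shift)

section \<open>From chains to compact generation\<close>

lemma chain_in_subgroup:
  fixes xs :: "'a::group_add list"
  assumes "successively R xs" "xs \<noteq> []" "hd xs \<in> H" "add_subgroup H"
    and R: "\<And>u v. R u v \<Longrightarrow> -u + v \<in> H"
  shows "last xs \<in> H"
proof -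
  have "\<And>x. successively R (x # ys) \<Longrightarrow> x \<in> H \<Longrightarrow> last (x # ys) \<in> H" for ys
  proof (induction ys)
    case Nil then show ?case by simp
  next
    case (Cons y ys)
    have "y = x + (-x + y)" by (simp add: add.assoc[symmetric])
    moreover have "-x + y \<in> H" using Cons.prems(1) R by simp
    ultimately have "y \<in> H" using Cons.prems(2) assms(4) unfolding add_subgroup_def by metis
    then show ?case using Cons by simp
  qed
  then show ?thesis using assms(1-3) by (cases xs) auto
qed

lemma cg_lemma:
  fixes d :: "'a::topological_group_add \<Rightarrow> 'a \<Rightarrow> real"
  assumes ch: "\<And>x. b_chains d b 0 x \<noteq> {}" and DK: "\<And>x y. d x y \<le> b \<Longrightarrow> -x+y \<in> K"
    and K: "compact K"
  shows "compactly_generated TYPE('a)"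
  unfolding compactly_generated_def
proof (intro exI conjI)
  show "compact K" by fact
  show "generated_subgroup K = UNIV"
  proof (rule set_eqI, simp add: generated_subgroup_def, intro allI impI, elim conjE)
    fix x H assume H: "add_subgroup H" "K \<subseteq> H"
    obtain xs where xs: "xs \<in> b_chains d b 0 x" using ch by blast
    then have "xs \<noteq> []" "hd xs = 0" "last xs = x" "successively (\<lambda>u v. d u v \<le> b) xs"
      unfolding b_chains_iff by auto
    moreover have "(0::'a) \<in> H" using H unfolding add_subgroup_def by simp
    ultimately show "x \<in> H" using chain_in_subgroup[of "\<lambda>u v. d u v \<le> b" xs H] H DK by auto
  qed
qed

lemma translate_eq_vimage:
  fixes k :: "'a::group_add"
  shows "(+) k ` U = (\<lambda>y. -k + y) -` U"
proof (rule set_eqI)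
  fix y
  have e: "y = k + (-k + y)" by (simp add: add.assoc[symmetric])
  show "y \<in> (+) k ` U \<longleftrightarrow> y \<in> (\<lambda>y. -k + y) -` U"
  proof
    assume "y \<in> (+) k ` U" then show "y \<in> (\<lambda>y. -k + y) -` U" by (auto simp: add.assoc[symmetric])
  next
    assume "y \<in> (\<lambda>y. -k + y) -` U" then show "y \<in> (+) k ` U" using e by (metis image_eqI vimageD)
  qed
qed

lemma open_translate:
  fixes k :: "'a::topological_group_add"
  shows "open U \<Longrightarrow> open ((+) k ` U)"
  unfolding translate_eq_vimage by (intro open_vimage continuous_intros) auto

lemma compact_translate:
  fixes k :: "'a::topological_group_add"
  shows "compact T \<Longrightarrow> compact ((+) k ` T)"
  by (rule compact_continuous_image) (intro continuous_intros, auto)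

lemma compact_diffs:
  fixes A B :: "'a::topological_group_add set"
  shows "compact A \<Longrightarrow> compact B \<Longrightarrow> compact ((\<lambda>p. - fst p + snd p) ` (A \<times> B))"
  by (intro compact_continuous_image compact_Times continuous_intros)

lemma compact_sums2:
  fixes A B :: "'a::topological_group_add set"
  shows "compact A \<Longrightarrow> compact B \<Longrightarrow> compact ((\<lambda>p. fst p + snd p) ` (A \<times> B))"
  by (intro compact_continuous_image compact_Times continuous_intros)

lemma lc_zero:
  fixes x :: "'a::topological_space"
  assumes "locally_compact_space (euclidean :: 'a topology)"
  obtains U K :: "'a set" where "open U" "compact K" "x \<in> U" "U \<subseteq> K"
  using assms unfolding locally_compact_space_def by (auto simp: openin_open) metis

lemma not_rel_compact_seq:
  fixes A :: "'a::{topological_group_add,t2_space} set"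
  assumes lc: "locally_compact_space (euclidean :: 'a topology)"
    and nc: "\<not>(\<exists>K. compact K \<and> A \<subseteq> K)"
  shows "\<exists>a. (\<forall>n. a n \<in> A) \<and> (\<forall>K. compact K \<longrightarrow> eventually (\<lambda>n. a n \<notin> K) sequentially)"
proof -
  obtain U Kc :: "'a set" where U: "open U" "compact Kc" "0 \<in> U" "U \<subseteq> Kc"
    using lc_zero[OF lc] by blast
  define T where "T = (\<lambda>p. - fst p + snd p) ` (Kc \<times> Kc)"
  have cT: "compact T" unfolding T_def using U by (intro compact_diffs)
  have T0: "0 \<in> T" unfolding T_def using U by (auto intro!: image_eqI[where x="(0,0)"])
  have Tsym: "-z \<in> T" if "z \<in> T" for z
  proof -
    obtain p q where "p \<in> Kc" "q \<in> Kc" "z = -p + q" using \<open>z \<in> T\<close> unfolding T_def by force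
    then show ?thesis unfolding T_def by (auto simp: minus_add intro!: image_eqI[where x="(q, p)"])
  qed
  have UT: "-u + v \<in> T" if "u \<in> U" "v \<in> U" for u v
    using that U(4) unfolding T_def by (auto intro!: image_eqI[where x="(u,v)"])
  define sep where "sep F \<longleftrightarrow> (\<forall>x\<in>F. \<forall>y\<in>F. x \<noteq> y \<longrightarrow> -x + y \<notin> T)" for F
  have step: "\<exists>a\<in>A. \<forall>x\<in>F. -x + a \<notin> T" if "finite F" for F
  proof (rule ccontr)
    assume nt: "\<not> ?thesis"
    then have "A \<subseteq> (\<Union>x\<in>F. (+) x ` T)"
    proof (intro subsetI)
      fix a assume "a \<in> A"
      then obtain x where "x \<in> F" "-x + a \<in> T" using nt by blast
      moreover have "a = x + (-x + a)" by (simp add: add.assoc[symmetric])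
      ultimately show "a \<in> (\<Union>x\<in>F. (+) x ` T)" by blast
    qed
    moreover have "compact (\<Union>x\<in>F. (+) x ` T)"
      using that cT by (intro compact_UN compact_translate) auto
    ultimately show False using nc by blast
  qed
  define P where "P = (\<lambda>(n::nat) (Fa :: 'a set \<times> 'a). finite (fst Fa) \<and> fst Fa \<subseteq> A \<and> snd Fa \<in> fst Fa \<and> sep (fst Fa))"
  define Q where "Q = (\<lambda>(n::nat) (Fa :: 'a set \<times> 'a) (Fa' :: 'a set \<times> 'a). fst Fa' = insert (snd Fa') (fst Fa) \<and> snd Fa' \<notin> fst Fa)"
  have "\<exists>f. \<forall>n. P n (f n) \<and> Q n (f n) (f (Suc n))"
  proof (rule dependent_nat_choice)
    obtain a where "a \<in> A" using step[of "{}"] by auto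
    then show "\<exists>x. P 0 x" unfolding P_def sep_def by (intro exI[where x="({a},a)"]) auto
  next
    fix Fa n assume "P n Fa"
    then have fin: "finite (fst Fa)" and sub: "fst Fa \<subseteq> A" and sp: "sep (fst Fa)" unfolding P_def by auto
    obtain a where a: "a \<in> A" "\<forall>x\<in>fst Fa. -x + a \<notin> T" using step[OF fin] by blast
    have anot: "a \<notin> fst Fa" using a(2) T0 by auto
    have "sep (insert a (fst Fa))"
      unfolding sep_def
    proof (intro ballI impI)
      fix x y assume xy: "x \<in> insert a (fst Fa)" "y \<in> insert a (fst Fa)" "x \<noteq> y"
      show "-x + y \<notin> T"
      proof (cases "x = a")
        case True then show ?thesis using xy a(2) Tsym by (metis insert_iff minus_add minus_minus)
      next
        case False
        show ?thesis
        proof (cases "y = a")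
          case True then show ?thesis using xy a(2) False by auto
        next
          case False then show ?thesis using xy \<open>x \<noteq> a\<close> sp unfolding sep_def by auto
        qed
      qed
    qed
    then show "\<exists>y. P (Suc n) y \<and> Q n Fa y"
      using fin sub a anot unfolding P_def Q_def by (intro exI[where x="(insert a (fst Fa), a)"]) auto
  qed
  then obtain f where f: "\<And>n. P n (f n)" "\<And>n. Q n (f n) (f (Suc n))" by blast
  define a where "a n = snd (f n)" for n
  have mono: "fst (f m) \<subseteq> fst (f n)" if "m \<le> n" for m n
    using lift_Suc_mono_le[of "\<lambda>n. fst (f n)", OF _ that] f(2) unfolding Q_def by auto
  have ain: "a i \<in> fst (f n)" if "i \<le> n" for i n
    using mono[OF that] f(1)[of i] unfolding P_def a_def by auto
  have adist: "a i \<noteq> a j" if "i < j" for i j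
  proof -
    define k where "k = j - 1"
    have k: "j = Suc k" using that unfolding k_def by simp
    have "a i \<in> fst (f k)" using ain that k by auto
    moreover have "a j \<notin> fst (f k)" using f(2)[of k] k unfolding Q_def a_def by auto
    ultimately show ?thesis by auto
  qed
  have asep: "-a i + a j \<notin> T" if "i \<noteq> j" for i j
  proof -
    have "a i \<noteq> a j"
    proof (cases "i < j")
      case True then show ?thesis using adist by blast
    next
      case False then have "j < i" using that by simp
      then show ?thesis using adist[of j i] by simp
    qed
    moreover have "a i \<in> fst (f (max i j))" "a j \<in> fst (f (max i j))" by (auto intro: ain)
    moreover have "sep (fst (f (max i j)))" using f(1) unfolding P_def by auto
    ultimately show ?thesis unfolding sep_def by auto
  qed
  show ?thesis
  proof (intro exI conjI allI impI)
    show "a n \<in> A" for n using f(1)[of n] unfolding P_def a_def by auto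
    fix K :: "'a set" assume K: "compact K"
    have "K \<subseteq> (\<Union>k\<in>K. (+) k ` U)"
    proof
      fix k assume "k \<in> K"
      moreover have "k \<in> (+) k ` U" using U(3) by (metis add.right_neutral image_eqI)
      ultimately show "k \<in> (\<Union>k\<in>K. (+) k ` U)" by blast
    qed
    then obtain Fin where Fin: "Fin \<subseteq> K" "finite Fin" "K \<subseteq> (\<Union>k\<in>Fin. (+) k ` U)"
      using compactE_image[OF K, of K "\<lambda>k. (+) k ` U"] open_translate[OF U(1)] by blast
    define g where "g n = (SOME k. k \<in> Fin \<and> a n \<in> (+) k ` U)" for n
    have g: "g n \<in> Fin \<and> a n \<in> (+) (g n) ` U" if "a n \<in> K" for n
    proof -
      have "\<exists>k. k \<in> Fin \<and> a n \<in> (+) k ` U" using that Fin(3) by blast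
      then show ?thesis unfolding g_def by (rule someI_ex)
    qed
    have "inj_on g {n. a n \<in> K}"
    proof (rule inj_onI)
      fix i j assume ij: "i \<in> {n. a n \<in> K}" "j \<in> {n. a n \<in> K}" "g i = g j"
      have "a i \<in> (+) (g i) ` U" using g[of i] ij(1) by simp
      then obtain u where u: "u \<in> U" "a i = g i + u" by blast
      have "a j \<in> (+) (g i) ` U" using g[of j] ij(2,3) by simp
      then obtain v where v: "v \<in> U" "a j = g i + v" by blast
      have "-a i + a j = -u + v" using u v by (simp add: minus_add add.assoc[symmetric])
      then have "-a i + a j \<in> T" using UT u v by simp
      then show "i = j" using asep by blast
    qed
    moreover have "g ` {n. a n \<in> K} \<subseteq> Fin"
    proof
      fix k assume "k \<in> g ` {n. a n \<in> K}"
      then obtain n where "a n \<in> K" "k = g n" by blast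
      then show "k \<in> Fin" using g[of n] by simp
    qed
    ultimately have "finite {n. a n \<in> K}"
      using inj_on_finite Fin(2) by blast
    then show "eventually (\<lambda>n. a n \<notin> K) sequentially"
      unfolding cofinite_eq_sequentially[symmetric] eventually_cofinite by simp
  qed
qed

lemma uniform_chain_cg:
  fixes d :: "'a::{topological_group_add,t2_space} \<Rightarrow> 'a \<Rightarrow> real"
  assumes lc: "locally_compact_space (euclidean :: 'a topology)"
    and u: "uniform_metric d" and ch: "b_chain_connected d b"
  shows "compactly_generated TYPE('a)"
proof -
  define D where "D = {-x + y | x y. d x y \<le> b}"
  show ?thesis
  proof (cases "\<exists>K. compact K \<and> D \<subseteq> K")
    case True
    then obtain K where "compact K" "D \<subseteq> K" by blast
    show ?thesis
    proof (rule cg_lemma[of d b K])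
      show "b_chains d b 0 x \<noteq> {}" for x using ch unfolding b_chain_connected_def by blast
      show "-x + y \<in> K" if "d x y \<le> b" for x y using that \<open>D \<subseteq> K\<close> unfolding D_def by blast
    qed fact
  next
    case False
    obtain a where a: "\<And>n. a n \<in> D" "\<And>K. compact K \<Longrightarrow> eventually (\<lambda>n. a n \<notin> K) sequentially"
      using not_rel_compact_seq[OF lc False] by blast
    have "\<forall>n. \<exists>xy. a n = - fst xy + snd xy \<and> d (fst xy) (snd xy) \<le> b"
    proof
      fix n obtain x y where "a n = -x + y" "d x y \<le> b" using a(1)[of n] unfolding D_def by blast
      then show "\<exists>xy. a n = - fst xy + snd xy \<and> d (fst xy) (snd xy) \<le> b" by (intro exI[where x="(x,y)"]) simp
    qed
    then obtain p where p: "\<And>n. a n = - fst (p n) + snd (p n) \<and> d (fst (p n)) (snd (p n)) \<le> b"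
      by metis
    have uu: "filterlim (\<lambda>n. d (fst (p n)) (snd (p n))) at_top sequentially \<longleftrightarrow>
        (\<forall>K. compact K \<longrightarrow> eventually (\<lambda>n. - fst (p n) + snd (p n) \<notin> K) sequentially)"
      using u unfolding uniform_metric_def
      by (rule conjE) (drule spec[of _ "\<lambda>n. fst (p n)"], drule spec[of _ "\<lambda>n. snd (p n)"], assumption)
    have "\<forall>K. compact K \<longrightarrow> eventually (\<lambda>n. - fst (p n) + snd (p n) \<notin> K) sequentially"
      using a(2) p by simp
    then have "filterlim (\<lambda>n. d (fst (p n)) (snd (p n))) at_top sequentially" using uu by blast
    then have "eventually (\<lambda>n. b + 1 \<le> d (fst (p n)) (snd (p n))) sequentially"
      unfolding filterlim_at_top by blast
    then obtain n where "b + 1 \<le> d (fst (p n)) (snd (p n))"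
      unfolding eventually_sequentially by auto
    with p[of n] show ?thesis by linarith
  qed
qed

primrec pw :: "'a::monoid_add set \<Rightarrow> nat \<Rightarrow> 'a set" where
  "pw S 0 = {0}"
| "pw S (Suc n) = {s + a | s a. s \<in> S \<and> a \<in> pw S n}"

lemma pw_one: "pw S 1 = S" by auto

lemma pw_Suc_mono: "(0::'a::monoid_add) \<in> S \<Longrightarrow> pw S n \<subseteq> pw S (Suc n)"
proof (induction n)
  case 0 then show ?case by force
next
  case (Suc n)
  show ?case
  proof
    fix x assume "x \<in> pw S (Suc n)"
    then obtain s a where sa: "x = s + a" "s \<in> S" "a \<in> pw S n" by auto
    have "a \<in> pw S (Suc n)" using Suc sa(3) by blast
    then show "x \<in> pw S (Suc (Suc n))" using sa by (subst pw.simps(2)) blast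
  qed
qed

lemma pw_mono: "(0::'a::monoid_add) \<in> S \<Longrightarrow> m \<le> n \<Longrightarrow> pw S m \<subseteq> pw S n"
  using lift_Suc_mono_le[of "pw S"] pw_Suc_mono by blast

lemma pw_add: "(a::'a::monoid_add) \<in> pw S m \<Longrightarrow> b \<in> pw S n \<Longrightarrow> a + b \<in> pw S (m + n)"
proof (induction m arbitrary: a)
  case 0 then show ?case by simp
next
  case (Suc m)
  then obtain s a' where "a = s + a'" "s \<in> S" "a' \<in> pw S m" by auto
  then show ?case using Suc.IH[of a'] Suc.prems by (auto simp: add.assoc)
qed

lemma pw_neg:
  assumes sym: "\<And>s. s \<in> S \<Longrightarrow> - s \<in> S"
  shows "(a::'a::group_add) \<in> pw S n \<Longrightarrow> - a \<in> pw S n"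
proof (induction n arbitrary: a)
  case 0 then show ?case by simp
next
  case (Suc n)
  then obtain s a' where a: "a = s + a'" "s \<in> S" "a' \<in> pw S n" by auto
  have "-a = -a' + -s" using a by (simp add: minus_add)
  moreover have "-a' + -s \<in> pw S (n + 1)"
    using pw_add[of "-a'" S n "-s" 1] Suc.IH[OF a(3)] sym[OF a(2)] by simp
  ultimately show ?case by simp
qed

lemma pw_compact:
  assumes "compact (S::'a::topological_group_add set)"
  shows "compact (pw S n)"
proof (induction n)
  case 0 then show ?case by simp
next
  case (Suc n)
  have "pw S (Suc n) = (\<lambda>p. fst p + snd p) ` (S \<times> pw S n)" by force
  then show ?case using compact_sums2[OF assms Suc] by simp
qed

definition wl :: "'a::monoid_add set \<Rightarrow> 'a \<Rightarrow> nat" where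
  "wl S g = (LEAST n. g \<in> pw S n)"

definition wd :: "'a::group_add set \<Rightarrow> 'a \<Rightarrow> 'a \<Rightarrow> real" where
  "wd S x y = real (wl S (-x + y))"

lemma chain_length_ge:
  assumes m: "is_metric d"
  shows "xs \<noteq> [] \<Longrightarrow> d (hd xs) (last xs) \<le> chain_length d xs"
proof (induction xs)
  case Nil then show ?case by simp
next
  case (Cons x xs)
  show ?case
  proof (cases xs)
    case Nil
    have "d x x = 0" using m unfolding is_metric_def by blast
    then show ?thesis using Nil by simp
  next
    case (Cons y ys)
    have "d x (last xs) \<le> d x y + d y (last xs)" using m unfolding is_metric_def by blast
    then show ?thesis using Cons.IH Cons by simp
  qed
qed

locale wsetup =
  fixes S :: "'a::{topological_group_add,t2_space} set"
  assumes cS: "compact S" and S0: "0 \<in> interior S" and Ssym: "\<And>s. s \<in> S \<Longrightarrow> -s \<in> S"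
    and Sgen: "\<And>g. \<exists>n. g \<in> pw S n"
begin

lemma S0': "0 \<in> S" using S0 interior_subset by blast

lemma wl_mem: "g \<in> pw S (wl S g)"
  unfolding wl_def using Sgen by (rule LeastI_ex)

lemma wl_le: "g \<in> pw S n \<Longrightarrow> wl S g \<le> n"
  unfolding wl_def by (rule Least_le)

lemma mem_pw_iff: "g \<in> pw S n \<longleftrightarrow> wl S g \<le> n"
  using wl_le wl_mem pw_mono[OF S0'] by blast

lemma wl_0_iff: "wl S g = 0 \<longleftrightarrow> g = 0"
  using mem_pw_iff[of g 0] by auto

lemma wl_neg: "wl S (-g) = wl S g"
proof -
  have "wl S (-g) \<le> wl S g" using pw_neg[OF Ssym wl_mem[of g]] mem_pw_iff by blast
  moreover have "wl S g \<le> wl S (-g)" using pw_neg[OF Ssym wl_mem[of "-g"]] mem_pw_iff by simp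
  ultimately show ?thesis by simp
qed

lemma wl_add: "wl S (a + b) \<le> wl S a + wl S b"
  using pw_add[OF wl_mem[of a] wl_mem[of b]] mem_pw_iff by blast

lemma wl_one: "s \<in> S \<Longrightarrow> wl S s \<le> 1"
  using mem_pw_iff[of s 1] pw_one by blast

lemma wd_metric: "is_metric (wd S)"
  unfolding is_metric_def wd_def
proof (intro conjI allI)
  fix x y z :: 'a
  show "(real (wl S (- x + y)) = 0) = (x = y)"
  proof -
    have "-x + y = 0 \<longleftrightarrow> x = y" by (metis add.right_neutral add_minus_cancel left_minus)
    then show ?thesis using wl_0_iff[of "-x+y"] by simp
  qed
  show "real (wl S (- x + y)) = real (wl S (- y + x))"
    using wl_neg[of "-x+y"] by (simp add: minus_add)
  have "-x + z = (-x + y) + (-y + z)" by (simp add: add.assoc[symmetric])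
  then show "real (wl S (- x + z)) \<le> real (wl S (- x + y)) + real (wl S (- y + z))"
    using wl_add[of "-x+y" "-y+z"] by simp
qed

lemma wd_left_inv: "left_invariant (wd S)"
  unfolding left_invariant_def wd_def by (simp add: minus_add add.assoc[symmetric])

lemma real_le_floor: "r \<ge> 0 \<Longrightarrow> real k \<le> r \<longleftrightarrow> k \<le> nat \<lfloor>r\<rfloor>"
  by (simp add: le_nat_iff le_floor_iff)

lemma wd_proper: "proper_metric (wd S)"
  unfolding proper_metric_def
proof (intro allI)
  fix x :: 'a and r :: real
  show "compact {y. wd S x y \<le> r}"
  proof (cases "r \<ge> 0")
    case False
    then have "{y. wd S x y \<le> r} = {}" unfolding wd_def by auto
    then show ?thesis by simp
  next
    case True
    have "{y. wd S x y \<le> r} = (+) x ` pw S (nat \<lfloor>r\<rfloor>)"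
    proof (rule set_eqI)
      fix y
      have e: "y = x + (-x + y)" by (simp add: add.assoc[symmetric])
      show "y \<in> {y. wd S x y \<le> r} \<longleftrightarrow> y \<in> (+) x ` pw S (nat \<lfloor>r\<rfloor>)"
      proof
        assume "y \<in> {y. wd S x y \<le> r}"
        then have "-x + y \<in> pw S (nat \<lfloor>r\<rfloor>)" using True real_le_floor mem_pw_iff unfolding wd_def by auto
        then show "y \<in> (+) x ` pw S (nat \<lfloor>r\<rfloor>)" using e by (metis image_eqI)
      next
        assume "y \<in> (+) x ` pw S (nat \<lfloor>r\<rfloor>)"
        then obtain z where "z \<in> pw S (nat \<lfloor>r\<rfloor>)" "y = x + z" by blast
        then show "y \<in> {y. wd S x y \<le> r}" using True real_le_floor mem_pw_iff unfolding wd_def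
          by (auto simp: add.assoc[symmetric])
      qed
    qed
    then show ?thesis by (simp add: compact_translate[OF pw_compact[OF cS]])
  qed
qed

lemma compact_in_pw:
  assumes K: "compact K"
  shows "\<exists>m. K \<subseteq> pw S m"
proof -
  have "K \<subseteq> (\<Union>k\<in>K. (+) k ` interior S)"
  proof
    fix k assume "k \<in> K"
    moreover have "k \<in> (+) k ` interior S" using S0 by (metis add.right_neutral image_eqI)
    ultimately show "k \<in> (\<Union>k\<in>K. (+) k ` interior S)" by blast
  qed
  then obtain Fin where Fin: "Fin \<subseteq> K" "finite Fin" "K \<subseteq> (\<Union>k\<in>Fin. (+) k ` interior S)"
    using compactE_image[OF K, of K "\<lambda>k. (+) k ` interior S"] open_translate[OF open_interior] by blast
  define m where "m = Suc (\<Sum>k\<in>Fin. wl S k)"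
  have "K \<subseteq> pw S m"
  proof
    fix y assume "y \<in> K"
    then obtain k s where ks: "k \<in> Fin" "s \<in> interior S" "y = k + s" using Fin(3) by blast
    have "k + s \<in> pw S (wl S k + 1)"
      using pw_add[OF wl_mem[of k], of s 1] ks(2) interior_subset pw_one by blast
    moreover have "wl S k + 1 \<le> m" unfolding m_def using member_le_sum[OF ks(1), of "wl S"] Fin(2) by simp
    ultimately show "y \<in> pw S m" using pw_mono[OF S0'] ks(3) by blast
  qed
  then show ?thesis by blast
qed

lemma wd_uniform: "uniform_metric (wd S)"
  unfolding uniform_metric_def
proof (intro conjI allI wd_metric)
  fix g h :: "nat \<Rightarrow> 'a"
  show "filterlim (\<lambda>n. wd S (g n) (h n)) at_top sequentially \<longleftrightarrow>
        (\<forall>K. compact K \<longrightarrow> eventually (\<lambda>n. - g n + h n \<notin> K) sequentially)"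
  proof
    assume lim: "filterlim (\<lambda>n. wd S (g n) (h n)) at_top sequentially"
    show "\<forall>K. compact K \<longrightarrow> eventually (\<lambda>n. - g n + h n \<notin> K) sequentially"
    proof (intro allI impI)
      fix K :: "'a set" assume "compact K"
      then obtain m where m: "K \<subseteq> pw S m" using compact_in_pw by blast
      have "eventually (\<lambda>n. real m + 1 \<le> wd S (g n) (h n)) sequentially"
        using lim unfolding filterlim_at_top by blast
      then show "eventually (\<lambda>n. - g n + h n \<notin> K) sequentially"
      proof (rule eventually_mono)
        fix n assume "real m + 1 \<le> wd S (g n) (h n)"
        then have "\<not> wl S (- g n + h n) \<le> m" unfolding wd_def by simp
        then show "- g n + h n \<notin> K" using m mem_pw_iff by blast
      qed
    qed
  next
    assume ev: "\<forall>K. compact K \<longrightarrow> eventually (\<lambda>n. - g n + h n \<notin> K) sequentially"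
    show "filterlim (\<lambda>n. wd S (g n) (h n)) at_top sequentially"
      unfolding filterlim_at_top
    proof
      fix Z :: real
      have "eventually (\<lambda>n. - g n + h n \<notin> pw S (nat \<lceil>Z\<rceil>)) sequentially"
        using ev pw_compact[OF cS] by blast
      then show "eventually (\<lambda>n. Z \<le> wd S (g n) (h n)) sequentially"
      proof (rule eventually_mono)
        fix n assume "- g n + h n \<notin> pw S (nat \<lceil>Z\<rceil>)"
        then have "nat \<lceil>Z\<rceil> < wl S (- g n + h n)" using mem_pw_iff by (meson not_le)
        then have "real (nat \<lceil>Z\<rceil>) \<le> wd S (g n) (h n)" unfolding wd_def by (metis less_imp_le of_nat_le_iff)
        moreover have "Z \<le> real (nat \<lceil>Z\<rceil>)" by (rule real_nat_ceiling_ge)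
        ultimately show "Z \<le> wd S (g n) (h n)" by linarith
      qed
    qed
  qed
qed

lemma wd_chain_exists:
  "-x + y \<in> pw S n \<Longrightarrow> \<exists>xs. xs \<in> b_chains (wd S) 1 x y \<and> chain_length (wd S) xs \<le> n"
proof (induction n arbitrary: x)
  case 0
  then have "y = x" by (metis add_minus_cancel add.right_neutral pw.simps(1) singletonD)
  then show ?case by (intro exI[where x="[x]"]) (simp add: b_chains_iff)
next
  case (Suc n)
  then obtain s a where sa: "-x + y = s + a" "s \<in> S" "a \<in> pw S n" by auto
  define x' where "x' = x + s"
  have "-x' + y = a" unfolding x'_def minus_add add.assoc sa(1) by simp
  then obtain xs where xs: "xs \<in> b_chains (wd S) 1 x' y" "chain_length (wd S) xs \<le> n"
    using Suc.IH sa(3) by metis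
  have d1: "wd S x x' \<le> 1" unfolding wd_def x'_def using wl_one[OF sa(2)] by (simp add: add.assoc[symmetric])
  obtain z zs where xsc: "xs = z # zs" using xs(1) unfolding b_chains_iff by (cases xs) auto
  have "x # xs \<in> b_chains (wd S) 1 x y"
    using xs(1) d1 xsc unfolding b_chains_iff by auto
  moreover have "chain_length (wd S) (x # xs) \<le> Suc n"
    using xs d1 xsc unfolding b_chains_iff by auto
  ultimately show ?case by blast
qed

lemma wd_chain_dist: "chain_dist (wd S) 1 x y = wd S x y"
proof -
  obtain xs where xs: "xs \<in> b_chains (wd S) 1 x y" "chain_length (wd S) xs \<le> wl S (-x + y)"
    using wd_chain_exists[OF wl_mem] by blast
  have ge: "wd S x y \<le> chain_length (wd S) ys" if "ys \<in> b_chains (wd S) 1 x y" for ys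
    using chain_length_ge[OF wd_metric, of ys] that unfolding b_chains_iff by auto
  have "wd S x y \<le> chain_dist (wd S) 1 x y"
    unfolding chain_dist_def using xs(1) ge by (intro cInf_greatest) auto
  moreover have "chain_dist (wd S) 1 x y \<le> chain_length (wd S) xs"
  proof -
    have "bdd_below (chain_length (wd S) ` b_chains (wd S) 1 x y)"
      by (rule bdd_belowI[where m="wd S x y"]) (use ge in auto)
    then show ?thesis unfolding chain_dist_def using xs(1) by (intro cInf_lower) auto
  qed
  ultimately show ?thesis using xs(2) unfolding wd_def by simp
qed

lemma wd_connected: "b_chain_connected (wd S) 1"
  unfolding b_chain_connected_def using wd_chain_exists[OF wl_mem] by blast

lemma wd_quasi_geodesic: "quasi_geodesic (wd S)"
  unfolding quasi_geodesic_def quasi_isometry_def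
proof (intro exI[where x=1] conjI wd_connected exI[where x="1::real"] ballI)
  fix z :: 'a
  show "\<exists>x\<in>UNIV. chain_dist (wd S) 1 z (id x) \<le> 1"
  proof -
    have "wl S 0 = 0" using wl_0_iff by blast
    then show ?thesis by (intro bexI[where x=z]) (auto simp: wd_chain_dist wd_def)
  qed
qed (auto simp: wd_chain_dist)

lemma wd_coarsely_geodesic: "coarsely_geodesic (wd S)"
  unfolding coarsely_geodesic_def
  by (intro exI[where x=1] conjI wd_connected) (auto simp: wd_chain_dist)

end

lemma gd_le:
  assumes "walk E xs" "hd xs = a" "last xs = b"
  shows "graph_dist E a b \<le> real (length xs - 1)"
proof -
  have ne: "xs \<noteq> []" using assms(1) unfolding walk_def by auto
  have "(LEAST n. \<exists>xs. walk E xs \<and> hd xs = a \<and> last xs = b \<and> length xs = Suc n) \<le> length xs - 1"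
    by (rule Least_le) (use assms ne in auto)
  then show ?thesis unfolding graph_dist_def by simp
qed

lemma gd_walk:
  assumes "walk E xs" "hd xs = a" "last xs = b"
  shows "\<exists>ws. walk E ws \<and> hd ws = a \<and> last ws = b \<and> real (length ws) = graph_dist E a b + 1"
proof -
  have ne: "xs \<noteq> []" using assms(1) unfolding walk_def by auto
  have ex: "\<exists>n. \<exists>xs. walk E xs \<and> hd xs = a \<and> last xs = b \<and> length xs = Suc n"
    using assms ne by (intro exI[where x="length xs - 1"] exI[where x=xs]) auto
  show ?thesis using LeastI_ex[OF ex] unfolding graph_dist_def by auto
qed

context wsetup
begin

definition sepN :: "'a set \<Rightarrow> bool" where
  "sepN N \<longleftrightarrow> (\<forall>n\<in>N. \<forall>m\<in>N. n \<noteq> m \<longrightarrow> 3 \<le> wd S n m)"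

lemma wd_sym: "wd S x y = wd S y x"
  using wd_metric unfolding is_metric_def by blast

lemma wd_tri:
  fixes x y z :: 'a
  shows "wd S x z \<le> wd S x y + wd S y z"
  using wd_metric unfolding is_metric_def by blast

lemma wd_self: "wd S x x = 0"
  using wd_metric unfolding is_metric_def by blast

lemma exists_max_sep: "\<exists>N. sepN N \<and> (\<forall>g. \<exists>n\<in>N. wd S n g \<le> 2)"
proof -
  have "\<exists>M\<in>{N. sepN N}. \<forall>X\<in>{N. sepN N}. M \<subseteq> X \<longrightarrow> X = M"
  proof (rule Zorn_Lemma, intro ballI)
    fix C assume C: "C \<in> chains {N. sepN N}"
    show "\<Union>C \<in> {N. sepN N}"
      unfolding mem_Collect_eq sepN_def
    proof (intro ballI impI)
      fix n m assume nm: "n \<in> \<Union>C" "m \<in> \<Union>C" "n \<noteq> m"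
      then obtain N1 N2 where N: "N1 \<in> C" "N2 \<in> C" "n \<in> N1" "m \<in> N2" by blast
      have "N1 \<subseteq> N2 \<or> N2 \<subseteq> N1" using C N unfolding chains_def chain_subset_def by blast
      moreover have "sepN N1" "sepN N2" using C N unfolding chains_def by auto
      ultimately show "3 \<le> wd S n m" using N nm unfolding sepN_def by blast
    qed
  qed
  then obtain M where M: "sepN M" "\<And>X. sepN X \<Longrightarrow> M \<subseteq> X \<Longrightarrow> X = M" by blast
  have "\<exists>n\<in>M. wd S n g \<le> 2" for g
  proof (rule ccontr)
    assume nc: "\<not> ?thesis"
    then have gM: "g \<notin> M" using wd_self by force
    have far: "3 \<le> wd S n g" if "n \<in> M" for n
    proof -
      have "\<not> real (wl S (-n + g)) \<le> 2" using nc that unfolding wd_def by auto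
      then have "3 \<le> wl S (-n + g)" by simp
      then show ?thesis unfolding wd_def by simp
    qed
    have "sepN (insert g M)"
      unfolding sepN_def
    proof (intro ballI impI)
      fix n m assume nm: "n \<in> insert g M" "m \<in> insert g M" "n \<noteq> m"
      show "3 \<le> wd S n m"
      proof (cases "n = g")
        case True
        then have "m \<in> M" using nm by auto
        then show ?thesis using far[of m] wd_sym[of g m] True by simp
      next
        case False
        then show ?thesis
        proof (cases "m = g")
          case True then show ?thesis using nm far \<open>n \<noteq> g\<close> by auto
        next
          case False then show ?thesis using nm \<open>n \<noteq> g\<close> M(1) unfolding sepN_def by auto
        qed
      qed
    qed
    then have "insert g M = M" using M(2) by blast
    then show False using gM by blast
  qed
  then show ?thesis using M(1) by blast
qed

lemma sep_mult:
  assumes N: "sepN N"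
  shows "\<exists>B. \<forall>x. finite (N \<inter> {y. wd S x y \<le> real r}) \<and> card (N \<inter> {y. wd S x y \<le> real r}) \<le> B"
proof -
  have "pw S r \<subseteq> (\<Union>h\<in>pw S r. (+) h ` interior S)"
  proof
    fix k assume "k \<in> pw S r"
    moreover have "k \<in> (+) k ` interior S" using S0 by (metis add.right_neutral image_eqI)
    ultimately show "k \<in> (\<Union>h\<in>pw S r. (+) h ` interior S)" by blast
  qed
  then obtain Fin where Fin0: "Fin \<subseteq> pw S r" and Fin: "finite Fin" "pw S r \<subseteq> (\<Union>h\<in>Fin. (+) h ` interior S)"
    using compactE_image[OF pw_compact[OF cS, of r], of "pw S r" "\<lambda>k. (+) k ` interior S"]
      open_translate[OF open_interior] by blast
  show ?thesis
  proof (intro exI allI)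
    fix x
    let ?B = "N \<inter> {y. wd S x y \<le> real r}"
    define sel where "sel y = (SOME h. h \<in> Fin \<and> -x + y \<in> (+) h ` interior S)" for y
    have sel: "sel y \<in> Fin \<and> -x + y \<in> (+) (sel y) ` interior S" if "y \<in> ?B" for y
    proof -
      have "wl S (-x + y) \<le> r" using that unfolding wd_def by simp
      then have "-x + y \<in> pw S r" using mem_pw_iff by blast
      then have "\<exists>h. h \<in> Fin \<and> -x + y \<in> (+) h ` interior S" using Fin(2) by blast
      then show ?thesis unfolding sel_def by (rule someI_ex)
    qed
    have inj: "inj_on sel ?B"
    proof (rule inj_onI)
      fix y y' assume yy: "y \<in> ?B" "y' \<in> ?B" "sel y = sel y'"
      have "-x + y \<in> (+) (sel y) ` interior S" using sel[OF yy(1)] by blast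
      then obtain s where s: "s \<in> S" "-x + y = sel y + s" using interior_subset by blast
      have "-x + y' \<in> (+) (sel y) ` interior S" using sel[OF yy(2)] yy(3) by simp
      then obtain s' where s': "s' \<in> S" "-x + y' = sel y + s'" using interior_subset by blast
      have "-y + y' = -(-x + y) + (-x + y')" by (simp add: minus_add add.assoc[symmetric])
      also have "\<dots> = -s + s'" unfolding s(2) s'(2) by (simp add: minus_add add.assoc[symmetric])
      finally have "-y + y' = -s + s'" .
      then have "wl S (-y + y') \<le> 2"
        using wl_add[of "-s" s'] wl_one[OF Ssym[OF s(1)]] wl_one[OF s'(1)] by simp
      then have "\<not> 3 \<le> wd S y y'" unfolding wd_def by simp
      then show "y = y'" using N yy unfolding sepN_def by blast
    qed
    moreover have "sel ` ?B \<subseteq> Fin" using sel by blast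
    ultimately have fin: "finite ?B" using inj_on_finite Fin(1) by blast
    have "card ?B \<le> card Fin" using card_inj_on_le[OF inj] sel Fin(1) by blast
    with fin show "finite ?B \<and> card ?B \<le> card Fin" by blast
  qed
qed

lemma wd_qi_graph: "qi_to_bounded_degree_graph (wd S)"
proof -
  obtain N where N: "sepN N" "\<And>g. \<exists>n\<in>N. wd S n g \<le> 2" using exists_max_sep by blast
  define c where "c g = (if g \<in> N then g else SOME n. n \<in> N \<and> wd S n g \<le> 2)" for g
  have c: "c g \<in> N \<and> wd S (c g) g \<le> 2" for g
  proof (cases "g \<in> N")
    case True then show ?thesis unfolding c_def using wd_self by simp
  next
    case False
    have ex: "\<exists>n. n \<in> N \<and> wd S n g \<le> 2" using N(2) by blast
    show ?thesis unfolding c_def using False someI_ex[OF ex] by simp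
  qed
  have cN: "c n = n" if "n \<in> N" for n using that unfolding c_def by simp
  have cntN: "countable N"
  proof -
    have "N = (\<Union>r. N \<inter> {y. wd S 0 y \<le> real r})"
    proof (rule set_eqI)
      fix y
      have "wd S 0 y \<le> real (wl S (-0 + y))" unfolding wd_def by simp
      then show "y \<in> N \<longleftrightarrow> y \<in> (\<Union>r. N \<inter> {y. wd S 0 y \<le> real r})" by blast
    qed
    moreover have "countable (N \<inter> {y. wd S 0 y \<le> real r})" for r
      using sep_mult[OF N(1), of r] by (auto intro: countable_finite)
    ultimately show ?thesis by (metis countable_UN[of UNIV] countableI_type)
  qed
  define \<phi> where "\<phi> = to_nat_on N"
  define \<psi> where "\<psi> = from_nat_into N"
  define V where "V = \<phi> ` N"
  have \<psi>\<phi>: "\<psi> (\<phi> n) = n" if "n \<in> N" for n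
    unfolding \<psi>_def \<phi>_def using cntN that by simp
  have \<psi>V: "\<psi> a \<in> N" "\<phi> (\<psi> a) = a" if "a \<in> V" for a
    using that \<psi>\<phi> unfolding V_def by auto
  define E where "E a b \<longleftrightarrow> a \<in> V \<and> b \<in> V \<and> a \<noteq> b \<and> wd S (\<psi> a) (\<psi> b) \<le> 5" for a b
  define F where "F g = \<phi> (c g)" for g
  have FV: "F g \<in> V" for g unfolding F_def V_def using c by blast
  have \<psi>F: "\<psi> (F g) = c g" for g unfolding F_def using \<psi>\<phi> c by blast
  have walk_ex: "\<exists>ws. walk E ws \<and> hd ws = F x \<and> last ws = F y \<and> length ws \<le> Suc k"
    if "-x + y \<in> pw S k" for k x y
    using that
  proof (induction k arbitrary: x)
    case 0
    then have "y = x" by (metis add_minus_cancel add.right_neutral pw.simps(1) singletonD)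
    then show ?case by (intro exI[where x="[F x]"]) (simp add: walk_iff)
  next
    case (Suc k)
    then obtain s a where sa: "-x + y = s + a" "s \<in> S" "a \<in> pw S k" by auto
    define x' where "x' = x + s"
    have "-x' + y = a" unfolding x'_def minus_add add.assoc sa(1) by simp
    then obtain ws where ws: "walk E ws" "hd ws = F x'" "last ws = F y" "length ws \<le> Suc k"
      using Suc.IH sa(3) by metis
    have d1: "wd S x x' \<le> 1" unfolding wd_def x'_def using wl_one[OF sa(2)] by (simp add: add.assoc[symmetric])
    show ?case
    proof (cases "F x = F x'")
      case True then show ?thesis using ws by (intro exI[where x=ws]) auto
    next
      case False
      have "wd S (c x) (c x') \<le> wd S (c x) x + wd S x x'  + wd S x' (c x')"
        using wd_tri[where x="c x" and y="x" and z="x'"] wd_tri[where x="c x" and y="x'" and z="c x'"] by linarith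
      also have "\<dots> \<le> 5" using c[of x] c[of x'] d1 wd_sym[of x' "c x'"] by linarith
      finally have "E (F x) (F x')" unfolding E_def using FV False \<psi>F by simp
      then have "walk E (F x # ws)" using ws unfolding walk_iff by (auto simp: successively_Cons)
      then show ?thesis using ws by (intro exI[where x="F x # ws"]) (auto simp: walk_iff)
    qed
  qed
  have walkd: "wd S (\<psi> (hd ws)) (\<psi> (last ws)) \<le> 5 * real (length ws - 1)" if "walk E ws" for ws
  proof -
    have "successively E ws \<Longrightarrow> ws \<noteq> [] \<Longrightarrow> wd S (\<psi> (hd ws)) (\<psi> (last ws)) \<le> 5 * real (length ws - 1)"
    proof (induction ws)
      case Nil then show ?case by simp
    next
      case (Cons a ws)
      show ?case
      proof (cases ws)
        case Nil then show ?thesis using wd_self by simp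
      next
        case (Cons b ws')
        have "E a b" "successively E ws" using Cons.prems Cons by auto
        then have "wd S (\<psi> a) (\<psi> b) \<le> 5" "wd S (\<psi> b) (\<psi> (last ws)) \<le> 5 * real (length ws - 1)"
          using Cons.IH Cons unfolding E_def by auto
        then have "wd S (\<psi> a) (\<psi> (last ws)) \<le> 5 + 5 * real (length ws - 1)"
          using wd_tri[where x="\<psi> a" and y="\<psi> b" and z="\<psi> (last ws)"] by linarith
        then show ?thesis using Cons by simp
      qed
    qed
    then show ?thesis using that unfolding walk_iff by blast
  qed
  have gd_up: "graph_dist E (F x) (F y) \<le> wd S x y" for x y
  proof -
    obtain ws where ws: "walk E ws" "hd ws = F x" "last ws = F y" "length ws \<le> Suc (wl S (-x + y))"
      using walk_ex[OF wl_mem] by blast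
    have "graph_dist E (F x) (F y) \<le> real (length ws - 1)" using gd_le[OF ws(1-3)] .
    also have "\<dots> \<le> wd S x y" unfolding wd_def using ws(4) by simp
    finally show ?thesis .
  qed
  have gd_low: "wd S x y \<le> 5 * graph_dist E (F x) (F y) + 4" for x y
  proof -
    obtain ws0 where ws0: "walk E ws0" "hd ws0 = F x" "last ws0 = F y"
      using walk_ex[OF wl_mem] by blast
    obtain ws where ws: "walk E ws" "hd ws = F x" "last ws = F y"
        "real (length ws) = graph_dist E (F x) (F y) + 1"
      using gd_walk[OF ws0] by blast
    have ne: "ws \<noteq> []" using ws(1) unfolding walk_def by simp
    have "wd S (c x) (c y) \<le> 5 * real (length ws - 1)" using walkd[OF ws(1)] ws(2,3) \<psi>F by simp
    also have "real (length ws - 1) = graph_dist E (F x) (F y)"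
    proof -
      have "1 \<le> length ws" using ne by (cases ws) auto
      then have "real (length ws - 1) = real (length ws) - 1" using of_nat_diff[of 1 "length ws"] by simp
      then show ?thesis using ws(4) by simp
    qed
    finally have "wd S (c x) (c y) \<le> 5 * graph_dist E (F x) (F y)" .
    moreover have "wd S x y \<le> wd S x (c x) + wd S (c x) (c y) + wd S (c y) y"
      using wd_tri[where x="x" and y="c x" and z="y"] wd_tri[where x="c x" and y="c y" and z="y"] by linarith
    moreover have "wd S x (c x) \<le> 2" "wd S (c y) y \<le> 2" using c[of x] c[of y] wd_sym[of x "c x"] by auto
    ultimately show ?thesis by linarith
  qed
  have gd_self: "graph_dist E a a \<le> 0" for a
    using gd_le[of E "[a]" a a] by (simp add: walk_iff)
  obtain B where B: "\<And>x. finite (N \<inter> {y. wd S x y \<le> real 5}) \<and> card (N \<inter> {y. wd S x y \<le> real 5}) \<le> B"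
    using sep_mult[OF N(1), of 5] by blast
  show ?thesis
    unfolding qi_to_bounded_degree_graph_def
  proof (intro exI conjI)
    show "V \<noteq> {}" using FV by blast
    show "is_graph V E" unfolding is_graph_def E_def using wd_sym by auto
    show "graph_connected V E" unfolding graph_connected_def
    proof (intro ballI)
      fix a b assume ab: "a \<in> V" "b \<in> V"
      have "F (\<psi> a) = a" "F (\<psi> b) = b" unfolding F_def using \<psi>V ab cN by auto
      then show "\<exists>xs. walk E xs \<and> hd xs = a \<and> last xs = b"
        using walk_ex[OF wl_mem, of "\<psi> a" "\<psi> b"] by metis
    qed
    show "bounded_degree V E" unfolding bounded_degree_def
    proof (intro exI[where x=B] ballI)
      fix a assume a: "a \<in> V"
      have sub: "{b. E a b} \<subseteq> \<phi> ` (N \<inter> {y. wd S (\<psi> a) y \<le> real 5})"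
      proof
        fix b assume "b \<in> {b. E a b}"
        then have "b \<in> V" "wd S (\<psi> a) (\<psi> b) \<le> 5" unfolding E_def by auto
        then show "b \<in> \<phi> ` (N \<inter> {y. wd S (\<psi> a) y \<le> real 5})"
          using \<psi>V[of b] by (metis (mono_tags, lifting) IntI image_eqI mem_Collect_eq of_nat_numeral)
      qed
      have fin: "finite (\<phi> ` (N \<inter> {y. wd S (\<psi> a) y \<le> real 5}))" using B by blast
      have "card {b. E a b} \<le> card (\<phi> ` (N \<inter> {y. wd S (\<psi> a) y \<le> real 5}))"
        by (rule card_mono[OF fin sub])
      also have "\<dots> \<le> card (N \<inter> {y. wd S (\<psi> a) y \<le> real 5})" by (rule card_image_le) (use B in blast)
      also have "\<dots> \<le> B" using B by blast
      finally show "finite {b. E a b} \<and> card {b. E a b} \<le> B" using finite_subset[OF sub fin] by blast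
    qed
    show "quasi_isometry UNIV (wd S) V (graph_dist E) F"
      unfolding quasi_isometry_def
    proof (intro conjI exI[where x="5::real"])
      show "F ` UNIV \<subseteq> V" using FV by blast
      show "(5::real) > 0" by simp
      show "\<forall>x\<in>UNIV. \<forall>y\<in>UNIV. wd S x y / 5 - 5 \<le> graph_dist E (F x) (F y) \<and>
              graph_dist E (F x) (F y) \<le> 5 * wd S x y + 5"
      proof (intro ballI conjI)
        fix x y :: 'a
        show "wd S x y / 5 - 5 \<le> graph_dist E (F x) (F y)" using gd_low[of x y] by simp
        have "0 \<le> wd S x y" unfolding wd_def by simp
        then show "graph_dist E (F x) (F y) \<le> 5 * wd S x y + 5" using gd_up[of x y] by linarith
      qed
      show "\<forall>z\<in>V. \<exists>x\<in>UNIV. graph_dist E z (F x) \<le> 5"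
      proof
        fix z assume "z \<in> V"
        then have "F (\<psi> z) = z" unfolding F_def using \<psi>V cN by auto
        then show "\<exists>x\<in>UNIV. graph_dist E z (F x) \<le> 5" using gd_self[of z] by (intro bexI[where x="\<psi> z"]) auto
      qed
    qed
  qed
qed

end

lemma gd_sym_le:
  assumes g: "is_graph V E" and w: "walk E xs" "hd xs = a" "last xs = b"
  shows "graph_dist E b a \<le> graph_dist E a b"
proof -
  obtain ws where ws: "walk E ws" "hd ws = a" "last ws = b" "real (length ws) = graph_dist E a b + 1"
    using gd_walk[OF w] by blast
  have ne: "ws \<noteq> []" using ws(1) unfolding walk_def by simp
  have "walk E (rev ws)" using ws(1) g unfolding walk_iff is_graph_def
    by (auto intro: successively_mono)
  moreover have "hd (rev ws) = b" "last (rev ws) = a" using ne ws by (auto simp: hd_rev last_rev)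
  ultimately have "graph_dist E b a \<le> real (length (rev ws) - 1)" using gd_le by blast
  also have "\<dots> = graph_dist E a b" using ws(4) ne by (cases ws) auto
  finally show ?thesis .
qed

lemma gd_sym:
  assumes g: "is_graph V E" "graph_connected V E" and ab: "a \<in> V" "b \<in> V"
  shows "graph_dist E a b = graph_dist E b a"
proof -
  obtain xs where xs: "walk E xs" "hd xs = a" "last xs = b" using g(2) ab unfolding graph_connected_def by blast
  obtain ys where ys: "walk E ys" "hd ys = b" "last ys = a" using g(2) ab unfolding graph_connected_def by blast
  show ?thesis using gd_sym_le[OF g(1) xs] gd_sym_le[OF g(1) ys] by linarith
qed

lemma gd_tri:
  assumes g: "graph_connected V E" and abc: "a \<in> V" "b \<in> V" "c \<in> V"
  shows "graph_dist E a c \<le> graph_dist E a b + graph_dist E b c"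
proof -
  obtain xs where xs: "walk E xs" "hd xs = a" "last xs = b" using g abc unfolding graph_connected_def by blast
  obtain ys where ys: "walk E ys" "hd ys = b" "last ys = c" using g abc unfolding graph_connected_def by blast
  obtain ws1 where ws1: "walk E ws1" "hd ws1 = a" "last ws1 = b" "real (length ws1) = graph_dist E a b + 1"
    using gd_walk[OF xs] by blast
  obtain ws2 where ws2: "walk E ws2" "hd ws2 = b" "last ws2 = c" "real (length ws2) = graph_dist E b c + 1"
    using gd_walk[OF ys] by blast
  obtain z zs where z: "ws2 = z # zs" using ws2(1) unfolding walk_def by (cases ws2) auto
  have ne1: "ws1 \<noteq> []" using ws1(1) unfolding walk_def by simp
  show ?thesis
  proof (cases zs)
    case Nil
    then have "b = c" using ws2 z by simp
    then show ?thesis using ws2(4) z Nil gd_le[OF ws1(1-3)] ws1(4) ne1 by simp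
  next
    case (Cons y ys')
    have "walk E (ws1 @ zs)"
      using ws1(1) ws2(1) ws1(3) ws2(2) z Cons unfolding walk_iff
      by (auto simp: successively_append_iff successively_Cons)
    moreover have "hd (ws1 @ zs) = a" "last (ws1 @ zs) = c" using ws1 ws2 z Cons ne1 by auto
    ultimately have "graph_dist E a c \<le> real (length (ws1 @ zs) - 1)" using gd_le by blast
    also have "\<dots> = graph_dist E a b + graph_dist E b c"
      using ws1(4) ws2(4) z ne1 by (cases ws1) auto
    finally show ?thesis .
  qed
qed

lemma gd_edge: "E a b \<Longrightarrow> graph_dist E a b \<le> 1"
  using gd_le[of E "[a,b]" a b] by (simp add: walk_iff)

lemma walk_in_V:
  assumes g: "is_graph V E" and "walk E ws" "hd ws \<in> V"
  shows "set ws \<subseteq> V"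
proof -
  have "successively E ws \<Longrightarrow> ws \<noteq> [] \<Longrightarrow> hd ws \<in> V \<Longrightarrow> set ws \<subseteq> V"
  proof (induction ws)
    case (Cons a ws)
    then show ?case using g unfolding is_graph_def by (cases ws) (auto simp: successively_Cons)
  qed simp
  then show ?thesis using assms unfolding walk_iff by blast
qed

lemma left_inv_ball:
  assumes "left_invariant d"
  shows "d x y = d 0 (-x + y)"
  using assms unfolding left_invariant_def by (metis add.right_neutral add_minus_cancel)

lemma proper_cg:
  fixes d :: "'a::topological_group_add \<Rightarrow> 'a \<Rightarrow> real"
  assumes li: "left_invariant d" and pr: "proper_metric d" and ch: "\<And>x. b_chains d b 0 x \<noteq> {}"
  shows "compactly_generated TYPE('a)"
proof (rule cg_lemma[of d b "{z. d 0 z \<le> b}"])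
  show "b_chains d b 0 x \<noteq> {}" for x by (rule ch)
  show "-x + y \<in> {z. d 0 z \<le> b}" if "d x y \<le> b" for x y using that left_inv_ball[OF li, of x y] by simp
  show "compact {z. d 0 z \<le> b}" using pr unfolding proper_metric_def by blast
qed

lemma graph_cg:
  fixes d :: "'a::topological_group_add \<Rightarrow> 'a \<Rightarrow> real"
  assumes li: "left_invariant d" and pr: "proper_metric d" and qi: "qi_to_bounded_degree_graph d"
  shows "compactly_generated TYPE('a)"
proof -
  obtain V E F where VEF: "V \<noteq> {}" "is_graph V E" "graph_connected V E" "quasi_isometry UNIV d V (graph_dist E) F"
    using qi unfolding qi_to_bounded_degree_graph_def by blast
  have FU: "F ` UNIV \<subseteq> V" and "\<exists>C>0.
     (\<forall>x\<in>UNIV. \<forall>y\<in>UNIV. d x y / C - C \<le> graph_dist E (F x) (F y) \<and> graph_dist E (F x) (F y) \<le> C * d x y + C) \<and>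
     (\<forall>z\<in>V. \<exists>x\<in>UNIV. graph_dist E z (F x) \<le> C)"
    using VEF(4) unfolding quasi_isometry_def by (rule conjunct1, rule conjunct2)
  then obtain C where C0: "C > 0" and
     C1: "\<forall>x\<in>UNIV. \<forall>y\<in>UNIV. d x y / C - C \<le> graph_dist E (F x) (F y) \<and> graph_dist E (F x) (F y) \<le> C * d x y + C"
     and C2: "\<forall>z\<in>V. \<exists>x\<in>UNIV. graph_dist E z (F x) \<le> C"
    by blast
  have C: "C > 0" "F ` UNIV \<subseteq> V"
    "\<And>x y. d x y / C - C \<le> graph_dist E (F x) (F y)"
    "\<And>z. z \<in> V \<Longrightarrow> \<exists>x. graph_dist E z (F x) \<le> C"
    using C0 FU C1 C2 by auto
  have FV: "F x \<in> V" for x using C(2) by blast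
  have dle: "d x y \<le> C * graph_dist E (F x) (F y) + C * C" for x y
  proof -
    have "d x y / C \<le> graph_dist E (F x) (F y) + C" using C(3)[of x y] by linarith
    then have "d x y \<le> C * (graph_dist E (F x) (F y) + C)" using C(1) by (simp add: divide_le_eq mult.commute)
    then show ?thesis by (simp add: algebra_simps)
  qed
  define p where "p z = (SOME x. graph_dist E z (F x) \<le> C)" for z
  have p: "graph_dist E z (F (p z)) \<le> C" if "z \<in> V" for z
    unfolding p_def using C(4)[OF that] by (rule someI_ex)
  have p': "graph_dist E (F (p z)) z \<le> C" if "z \<in> V" for z
    using p[OF that] gd_sym[OF VEF(2,3) that FV] by simp
  define b where "b = 3 * C * C + C"
  have ends: "d x (p (F x)) \<le> b" "d (p (F x)) x \<le> b" for x
  proof -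
    have "d x (p (F x)) \<le> C * C + C * C" using dle[of x "p (F x)"] p[OF FV[of x]] C(1)
      by (smt (verit) mult_left_mono)
    moreover have "d (p (F x)) x \<le> C * C + C * C" using dle[of "p (F x)" x] p'[OF FV[of x]] C(1)
      by (smt (verit) mult_left_mono)
    moreover have "C * C + C * C \<le> b" unfolding b_def using C(1) by (simp add: algebra_simps)
    ultimately show "d x (p (F x)) \<le> b" "d (p (F x)) x \<le> b" by linarith+
  qed
  have mid: "d (p u) (p v) \<le> b" if "E u v" for u v
  proof -
    have uv: "u \<in> V" "v \<in> V" using that VEF(2) unfolding is_graph_def by auto
    have "graph_dist E (F (p u)) (F (p v)) \<le> graph_dist E (F (p u)) u + graph_dist E u (F (p v))"
      using gd_tri[OF VEF(3) FV uv(1) FV] .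
    moreover have "graph_dist E u (F (p v)) \<le> graph_dist E u v + graph_dist E v (F (p v))"
      using gd_tri[OF VEF(3) uv FV] .
    moreover have "graph_dist E u v \<le> 1" using gd_edge[of E u v] that by simp
    ultimately have "graph_dist E (F (p u)) (F (p v)) \<le> 2 * C + 1" using p[OF uv(2)] p'[OF uv(1)] by linarith
    then have "C * graph_dist E (F (p u)) (F (p v)) \<le> C * (2 * C + 1)" using C(1) by (simp add: mult_left_mono)
    then show ?thesis using dle[of "p u" "p v"] unfolding b_def by (simp add: algebra_simps)
  qed
  show ?thesis
  proof (rule proper_cg[OF li pr])
    fix x :: 'a
    obtain ws where ws: "walk E ws" "hd ws = F 0" "last ws = F x"
      using VEF(3) FV unfolding graph_connected_def by blast
    have ne: "ws \<noteq> []" using ws(1) unfolding walk_def by simp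
    have sw: "successively (\<lambda>u v. d u v \<le> b) (map p ws)"
      unfolding successively_map using ws(1) mid unfolding walk_iff by (auto intro: successively_mono)
    have "0 # map p ws @ [x] \<in> b_chains d b 0 x"
      unfolding b_chains_iff using ne sw ends[of 0] ends[of x] ws(2,3)
      by (auto simp: successively_append_iff successively_Cons hd_map last_map)
    then show "b_chains d b 0 x \<noteq> {}" by blast
  qed
qed

lemma cg_to_wsetup:
  assumes lc: "locally_compact_space (euclidean :: ('a::{topological_group_add, t2_space}) topology)"
    and cg: "compactly_generated TYPE('a)"
  shows "\<exists>S :: 'a set. wsetup S"
proof -
  obtain K :: "'a set" where K: "compact K" "generated_subgroup K = UNIV"
    using cg unfolding compactly_generated_def by blast
  obtain U Kc :: "'a set" where U: "open U" "compact Kc" "0 \<in> U" "U \<subseteq> Kc"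
    using lc_zero[OF lc] by blast
  define S where "S = K \<union> uminus ` K \<union> Kc \<union> uminus ` Kc"
  have cS: "compact S" unfolding S_def using K(1) U(2)
    by (intro compact_Un compact_continuous_image continuous_intros) auto
  have "U \<subseteq> S" unfolding S_def using U(4) by blast
  then have S0: "0 \<in> interior S" using interior_maximal[OF _ U(1)] U(3) by blast
  have Ssym: "-s \<in> S" if "s \<in> S" for s using that unfolding S_def by auto
  have "0 \<in> S" using S0 interior_subset by blast
  define H where "H = (\<Union>n. pw S n)"
  have "add_subgroup H"
    unfolding add_subgroup_def H_def
  proof (intro conjI ballI)
    show "0 \<in> (\<Union>n. pw S n)" by (auto intro: exI[where x=0])
    fix x y assume "x \<in> (\<Union>n. pw S n)" "y \<in> (\<Union>n. pw S n)"
    then obtain m n where "x \<in> pw S m" "y \<in> pw S n" by blast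
    then show "x + y \<in> (\<Union>n. pw S n)" using pw_add by blast
  next
    fix x assume "x \<in> (\<Union>n. pw S n)"
    then obtain m where "x \<in> pw S m" by blast
    then show "-x \<in> (\<Union>n. pw S n)" using pw_neg[OF Ssym] by blast
  qed
  moreover have "K \<subseteq> H" unfolding H_def S_def using pw_one[of S] S_def by blast
  ultimately have "generated_subgroup K \<subseteq> H" unfolding generated_subgroup_def by blast
  then have "\<And>g. \<exists>n. g \<in> pw S n" using K(2) unfolding H_def by blast
  then show ?thesis using cS S0 Ssym by (intro exI[where x=S]) (unfold_locales)
qed

theorem proposition6p4:
  assumes "locally_compact_space (euclidean :: ('a::{topological_group_add, t2_space}) topology)"
  shows "((\<exists>d :: 'a \<Rightarrow> 'a \<Rightarrow> real. uniform_metric d \<and> coarsely_geodesic d)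
           \<longleftrightarrow> (\<exists>d :: 'a \<Rightarrow> 'a \<Rightarrow> real. uniform_metric d \<and> quasi_geodesic d))
       \<and> ((\<exists>d :: 'a \<Rightarrow> 'a \<Rightarrow> real. uniform_metric d \<and> quasi_geodesic d)
           \<longleftrightarrow> (\<exists>d :: 'a \<Rightarrow> 'a \<Rightarrow> real. is_metric d \<and> left_invariant d \<and> proper_metric d \<and> quasi_geodesic d))
       \<and> ((\<exists>d :: 'a \<Rightarrow> 'a \<Rightarrow> real. is_metric d \<and> left_invariant d \<and> proper_metric d \<and> quasi_geodesic d)
           \<longleftrightarrow> (\<exists>d :: 'a \<Rightarrow> 'a \<Rightarrow> real. is_metric d \<and> left_invariant d \<and> proper_metric d \<and> qi_to_bounded_degree_graph d))
       \<and> ((\<exists>d :: 'a \<Rightarrow> 'a \<Rightarrow> real. is_metric d \<and> left_invariant d \<and> proper_metric d \<and> qi_to_bounded_degree_graph d)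
           \<longleftrightarrow> compactly_generated TYPE('a))"
proof -
  let ?P1 = "\<exists>d :: 'a \<Rightarrow> 'a \<Rightarrow> real. uniform_metric d \<and> coarsely_geodesic d"
  let ?P2 = "\<exists>d :: 'a \<Rightarrow> 'a \<Rightarrow> real. uniform_metric d \<and> quasi_geodesic d"
  let ?P3 = "\<exists>d :: 'a \<Rightarrow> 'a \<Rightarrow> real. is_metric d \<and> left_invariant d \<and> proper_metric d \<and> quasi_geodesic d"
  let ?P4 = "\<exists>d :: 'a \<Rightarrow> 'a \<Rightarrow> real. is_metric d \<and> left_invariant d \<and> proper_metric d \<and> qi_to_bounded_degree_graph d"
  let ?P5 = "compactly_generated TYPE('a)"
  have 1: "?P5" if h: ?P1
  proof -
    obtain d :: "'a \<Rightarrow> 'a \<Rightarrow> real" where d: "uniform_metric d" "coarsely_geodesic d" using h by blast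
    then obtain b where "b_chain_connected d b" unfolding coarsely_geodesic_def by blast
    then show ?thesis using uniform_chain_cg[OF assms d(1)] by blast
  qed
  have 2: "?P5" if h: ?P2
  proof -
    obtain d :: "'a \<Rightarrow> 'a \<Rightarrow> real" where d: "uniform_metric d" "quasi_geodesic d" using h by blast
    then obtain b where "b_chain_connected d b" unfolding quasi_geodesic_def by blast
    then show ?thesis using uniform_chain_cg[OF assms d(1)] by blast
  qed
  have 3: "?P5" if h: ?P3
  proof -
    obtain d :: "'a \<Rightarrow> 'a \<Rightarrow> real" where d: "left_invariant d" "proper_metric d" "quasi_geodesic d"
      using h by blast
    then obtain b where "b_chain_connected d b" unfolding quasi_geodesic_def by blast
    then show ?thesis using proper_cg[OF d(1,2), of b] unfolding b_chain_connected_def by blast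
  qed
  have 4: "?P5" if h: ?P4
  proof -
    obtain d :: "'a \<Rightarrow> 'a \<Rightarrow> real" where d: "left_invariant d" "proper_metric d" "qi_to_bounded_degree_graph d"
      using h by blast
    then show ?thesis using graph_cg by blast
  qed
  have 5: "?P1 \<and> ?P2 \<and> ?P3 \<and> ?P4" if h: ?P5
  proof -
    obtain S :: "'a set" where "wsetup S" using cg_to_wsetup[OF assms h] by blast
    then interpret w: wsetup S .
    show ?thesis
      using w.wd_uniform w.wd_coarsely_geodesic w.wd_quasi_geodesic w.wd_metric w.wd_left_inv
        w.wd_proper w.wd_qi_graph by blast
  qed
  show ?thesis using 1 2 3 4 5 by blast
qed

end
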